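(* Let $\mathfrak{R}$ be an alternative ring containing a nontrivial idempotent $e_1$, with Peirce decomposition $\mathfrak{R}=\mathfrak{R}_{11}\oplus\mathfrak{R}_{12}\oplus\mathfrak{R}_{21}\oplus\mathfrak{R}_{22}$, which satisfies: (i) if $a_{11}\in\mathfrak{R}_{11}$, $a_{22}\in\mathfrak{R}_{22}$ and $[a_{11}+a_{22},\mathfrak{R}_{12}]=0$, then $a_{11}+a_{22}\in\mathcal{Z}(\mathfrak{R})$; (ii) if $a_{11}\in\mathfrak{R}_{11}$, $a_{22}\in\mathfrak{R}_{22}$ and $[a_{11}+a_{22},\mathfrak{R}_{21}]=0$, then $a_{11}+a_{22}\in\mathcal{Z}(\mathfrak{R})$. Then every multiplicative Lie $3$-derivation $\mathcal{D}$ of $\mathfrak{R}$ is almost additive, i.e. $\mathcal{D}(a+b)-\mathcal{D}(a)-\mathcal{D}(b)\in\mathcal{Z}(\mathfrak{R})$ for all $a,b\in\mathfrak{R}$.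
   Context: Rings are not assumed associative or unital. $\mathfrak{R}$ is alternative if $(x,x,y)=0=(y,x,x)$ for all $x,y$, where $(x,y,z)=(xy)z-x(yz)$. $[x,y]=xy-yx$; $\mathcal{Z}(\mathfrak{R})=\{r: [r,x]=0\ \forall x\in\mathfrak{R}\}$. A map $\mathcal{D}\colon\mathfrak{R}\to\mathfrak{R}$, not necessarily additive, is a multiplicative Lie $3$-derivation if $\mathcal{D}([[x,y],w])=[[\mathcal{D}(x),y],w]+[[x,\mathcal{D}(y)],w]+[[x,y],\mathcal{D}(w)]$ for all $x,y,w\in\mathfrak{R}$. A nontrivial idempotent is $e_1\ne0$ with $e_1^2=e_1$ which is not a multiplicative identity. With $e_2a:=a-e_1a$, $ae_2:=a-ae_1$, set $\mathfrak{R}_{ij}=e_i\mathfrak{R}e_j$ ($i,j=1,2$), so $\mathfrak{R}=\bigoplus_{i,j}\mathfrak{R}_{ij}$. *)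

theory Defs
  imports Main
begin

text \<open>Rings are neither assumed associative nor unital: we use an additive abelian
group with a multiplication that is biadditive (distributive on both sides).\<close>

definition assoc3 :: "'a::{ab_group_add,times} \<Rightarrow> 'a \<Rightarrow> 'a \<Rightarrow> 'a" where
  "assoc3 x y z = (x * y) * z - x * (y * z)"

definition nonassoc_ring :: "'a::{ab_group_add,times} itself \<Rightarrow> bool" where
  "nonassoc_ring _ \<longleftrightarrow> (\<forall>x y z::'a. x * (y + z) = x * y + x * z \<and> (x + y) * z = x * z + y * z)"

definition alternative_ring :: "'a::{ab_group_add,times} itself \<Rightarrow> bool" where
  "alternative_ring T \<longleftrightarrow> nonassoc_ring T \<and>
     (\<forall>x y::'a. assoc3 x x y = 0 \<and> assoc3 y x x = 0)"

definition comm :: "'a::{ab_group_add,times} \<Rightarrow> 'a \<Rightarrow> 'a" where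
  "comm x y = x * y - y * x"

definition center :: "'a::{ab_group_add,times} set" where
  "center = {r. \<forall>x. comm r x = 0}"

definition mult_lie_3_derivation :: "('a::{ab_group_add,times} \<Rightarrow> 'a) \<Rightarrow> bool" where
  "mult_lie_3_derivation D \<longleftrightarrow> (\<forall>x y w.
     D (comm (comm x y) w) = comm (comm (D x) y) w + comm (comm x (D y)) w + comm (comm x y) (D w))"

definition nontrivial_idempotent :: "'a::{ab_group_add,times} \<Rightarrow> bool" where
  "nontrivial_idempotent e \<longleftrightarrow> e \<noteq> 0 \<and> e * e = e \<and> \<not> (\<forall>x. e * x = x \<and> x * e = x)"

text \<open>Left action of e_i and right action of e_j (e_2 a := a - e_1 a, a e_2 := a - a e_1).\<close>
definition lmul :: "'a::{ab_group_add,times} \<Rightarrow> nat \<Rightarrow> 'a \<Rightarrow> 'a" where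
  "lmul e i a = (if i = 1 then e * a else a - e * a)"

definition rmul :: "'a::{ab_group_add,times} \<Rightarrow> nat \<Rightarrow> 'a \<Rightarrow> 'a" where
  "rmul e j a = (if j = 1 then a * e else a - a * e)"

text \<open>Peirce component R_ij = e_i R e_j, with e_i a e_j read as (e_i a) e_j
  (which equals e_i (a e_j) in an alternative ring).\<close>
definition peirce :: "'a::{ab_group_add,times} \<Rightarrow> nat \<Rightarrow> nat \<Rightarrow> 'a set" where
  "peirce e i j = {rmul e j (lmul e i a) | a. True}"

end

theory Submission imports Defs begin

locale AR =
  fixes e :: "'a::{ab_group_add,times}"
  assumes dl[simp]: "(x::'a) * (y + z) = x*y + x*z"
  and dr[simp]: "((x::'a) + y) * z = x*z + y*z"
  and la: "assoc3 (x::'a) x y = 0"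
  and ra: "assoc3 (y::'a) x x = 0"
  and ee: "e * e = e"
begin

lemma mz[simp]: "(x::'a) * 0 = 0"
proof - have "x*(0+0) = x*0 + x*0" by (rule dl) thus ?thesis by simp qed
lemma zm[simp]: "0 * (x::'a) = 0"
proof - have "(0+0)*x = 0*x + 0*x" by (rule dr) thus ?thesis by simp qed
lemma mneg[simp]: "(x::'a) * (- y) = - (x*y)"
proof - have "x*(y + - y) = x*y + x*(-y)" by (rule dl)
  thus ?thesis by (simp add: eq_neg_iff_add_eq_0 add.commute) qed
lemma negm[simp]: "(- (x::'a)) * y = - (x*y)"
proof - have "(x + - x)*y = x*y + (-x)*y" by (rule dr)
  thus ?thesis by (simp add: eq_neg_iff_add_eq_0 add.commute) qed
lemma mdiff[simp]: "(x::'a) * (y - z) = x*y - x*z"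
  by (metis dl mneg diff_conv_add_uminus)
lemma diffm[simp]: "((x::'a) - y) * z = x*z - y*z"
  by (metis dr negm diff_conv_add_uminus)

lemma la': "((x::'a)*x)*y = x*(x*y)" using la[of x y] by (simp add: assoc3_def)
lemma ra': "((y::'a)*x)*x = y*(x*x)" using ra[of y x] by (simp add: assoc3_def)

lemma sw12: "assoc3 (x::'a) y z = - assoc3 y x z"
proof -
  have "assoc3 (x+y) (x+y) z = 0" by (rule la)
  thus ?thesis by (simp add: assoc3_def la' algebra_simps)
qed
lemma sw23: "assoc3 (x::'a) y z = - assoc3 x z y"
proof -
  have "assoc3 x (y+z) (y+z) = 0" by (rule ra)
  thus ?thesis by (simp add: assoc3_def ra' algebra_simps)
qed

lemma eex: "e*(e*x) = e*x" using la'[of e x] unfolding ee by (rule sym)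
lemma xee: "(x*e)*e = x*e" using ra'[of x e] unfolding ee .
lemma flex: "(e*x)*e = e*(x*e)"
proof - have "assoc3 e x e = - assoc3 e e x" by (rule sw23)
  thus ?thesis using la[of e x] by (simp add: assoc3_def) qed

definition "c11 x \<longleftrightarrow> e*x = x \<and> x*e = x"
definition "c12 x \<longleftrightarrow> e*x = x \<and> x*e = 0"
definition "c21 x \<longleftrightarrow> e*x = 0 \<and> x*e = x"
definition "c22 x \<longleftrightarrow> e*x = 0 \<and> x*e = 0"
definition "q11 x = (e*x)*e"
definition "q12 x = e*x - (e*x)*e"
definition "q21 x = (x - e*x)*e"
definition "q22 x = (x - e*x) - (x - e*x)*e"

lemma decomp: "x = q11 x + q12 x + q21 x + q22 x"
  by (simp add: q11_def q12_def q21_def q22_def algebra_simps)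
lemma cq11: "c11 (q11 x)" by (simp add: c11_def q11_def flex eex xee)
lemma cq12: "c12 (q12 x)" by (simp add: c12_def q12_def flex eex xee)
lemma cq21: "c21 (q21 x)" by (simp add: c21_def q21_def flex[symmetric] eex xee)
lemma cq22: "c22 (q22 x)" by (simp add: c22_def q22_def flex[symmetric] eex xee)

lemma ce: "comm x e = q21 x - q12 x"
  by (simp add: comm_def q21_def q12_def algebra_simps)

lemma cl11: "c11 x \<Longrightarrow> c11 y \<Longrightarrow> c11 (x+y)" "c11 x \<Longrightarrow> c11 (-x)" "c11 x \<Longrightarrow> c11 y \<Longrightarrow> c11 (x-y)" "c11 0"
  by (auto simp: c11_def)
lemma cl12: "c12 x \<Longrightarrow> c12 y \<Longrightarrow> c12 (x+y)" "c12 x \<Longrightarrow> c12 (-x)" "c12 x \<Longrightarrow> c12 y \<Longrightarrow> c12 (x-y)" "c12 0"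
  by (auto simp: c12_def)
lemma cl21: "c21 x \<Longrightarrow> c21 y \<Longrightarrow> c21 (x+y)" "c21 x \<Longrightarrow> c21 (-x)" "c21 x \<Longrightarrow> c21 y \<Longrightarrow> c21 (x-y)" "c21 0"
  by (auto simp: c21_def)
lemma cl22: "c22 x \<Longrightarrow> c22 y \<Longrightarrow> c22 (x+y)" "c22 x \<Longrightarrow> c22 (-x)" "c22 x \<Longrightarrow> c22 y \<Longrightarrow> c22 (x-y)" "c22 0"
  by (auto simp: c22_def)

lemma comm_addl[simp]: "comm ((x::'a)+y) z = comm x z + comm y z" by (simp add: comm_def algebra_simps)
lemma comm_addr[simp]: "comm (z::'a) (x+y) = comm z x + comm z y" by (simp add: comm_def algebra_simps)
lemma comm_negl[simp]: "comm (-(x::'a)) z = - comm x z" by (simp add: comm_def algebra_simps)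
lemma comm_negr[simp]: "comm (z::'a) (-x) = - comm z x" by (simp add: comm_def algebra_simps)
lemma comm_diffl[simp]: "comm ((x::'a)-y) z = comm x z - comm y z" by (simp add: comm_def algebra_simps)
lemma comm_diffr[simp]: "comm (z::'a) (x-y) = comm z x - comm z y" by (simp add: comm_def algebra_simps)
lemma comm_0[simp]: "comm 0 (x::'a) = 0" "comm (x::'a) 0 = 0" "comm (x::'a) x = 0" by (simp_all add: comm_def)
lemma comm_anti: "comm (x::'a) y = - comm y x" by (simp add: comm_def)

lemma ce11: "c11 x \<Longrightarrow> comm x e = 0" by (simp add: c11_def comm_def)
lemma ce12: "c12 x \<Longrightarrow> comm x e = - x" by (simp add: c12_def comm_def)
lemma ce21: "c21 x \<Longrightarrow> comm x e = x" by (simp add: c21_def comm_def)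
lemma ce22: "c22 x \<Longrightarrow> comm x e = 0" by (simp add: c22_def comm_def)

lemma off_zero: "c12 u \<Longrightarrow> c21 v \<Longrightarrow> u + v = 0 \<Longrightarrow> u = 0 \<and> v = 0"
proof -
  assume a: "c12 u" "c21 v" "u + v = 0"
  have "e*(u+v) = 0" using a(3) by simp
  hence "u = 0" using a(1,2) by (simp add: c12_def c21_def)
  thus ?thesis using a(3) by simp
qed


lemma cyc: "assoc3 (x::'a) y z = assoc3 y z x"
  by (metis sw12 sw23 minus_minus)

lemma p11_21: assumes "c11 x" "c21 t" shows "x*t = 0" "c21 (t*x)"
proof -
  from assms have h: "e*x = x" "x*e = x" "e*t = 0" "t*e = t" by (auto simp: c11_def c21_def)
  have A1: "assoc3 t e x = 0" using h by (simp add: assoc3_def)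
  have "assoc3 e t x = - assoc3 t e x" by (rule sw12)
  hence B1: "e*(t*x) = 0" using A1 h by (simp add: assoc3_def)
  have "assoc3 t x e = - assoc3 t e x" by (rule sw23)
  hence B2: "(t*x)*e = t*x" using A1 h by (simp add: assoc3_def)
  show "c21 (t*x)" using B1 B2 by (simp add: c21_def)
  have "assoc3 x e t = assoc3 e t x" by (rule cyc)
  moreover have "assoc3 e t x = 0" using B1 h by (simp add: assoc3_def)
  ultimately show "x*t = 0" using h by (simp add: assoc3_def)
qed

lemma p22_21: assumes "c22 x" "c21 t" shows "t*x = 0" "c21 (x*t)"
proof -
  from assms have h: "e*x = 0" "x*e = 0" "e*t = 0" "t*e = t" by (auto simp: c22_def c21_def)
  have A1: "assoc3 x e t = 0" using h by (simp add: assoc3_def)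
  have "assoc3 x t e = - assoc3 x e t" by (rule sw23)
  hence B2: "(x*t)*e = x*t" using A1 h by (simp add: assoc3_def)
  have "assoc3 e x t = - assoc3 x e t" by (rule sw12)
  hence B1: "e*(x*t) = 0" using A1 h by (simp add: assoc3_def)
  show "c21 (x*t)" using B1 B2 by (simp add: c21_def)
  have "assoc3 t e x = assoc3 e x t" by (rule cyc)
  moreover have "assoc3 e x t = 0" using B1 h by (simp add: assoc3_def)
  ultimately show "t*x = 0" using h by (simp add: assoc3_def)
qed

lemma p11_12: assumes "c11 x" "c12 t" shows "t*x = 0" "c12 (x*t)"
proof -
  from assms have h: "e*x = x" "x*e = x" "e*t = t" "t*e = 0" by (auto simp: c11_def c12_def)
  have A1: "assoc3 x e t = 0" using h by (simp add: assoc3_def)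
  have "assoc3 e x t = - assoc3 x e t" by (rule sw12)
  hence B1: "e*(x*t) = x*t" using A1 h by (simp add: assoc3_def)
  have "assoc3 x t e = - assoc3 x e t" by (rule sw23)
  hence B2: "(x*t)*e = 0" using A1 h by (simp add: assoc3_def)
  show "c12 (x*t)" using B1 B2 by (simp add: c12_def)
  have "assoc3 t e x = assoc3 e x t" by (rule cyc)
  moreover have "assoc3 e x t = 0" using B1 h by (simp add: assoc3_def)
  ultimately show "t*x = 0" using h by (simp add: assoc3_def)
qed

lemma p22_12: assumes "c22 x" "c12 t" shows "x*t = 0" "c12 (t*x)"
proof -
  from assms have h: "e*x = 0" "x*e = 0" "e*t = t" "t*e = 0" by (auto simp: c22_def c12_def)
  have A1: "assoc3 t e x = 0" using h by (simp add: assoc3_def)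
  have "assoc3 e t x = - assoc3 t e x" by (rule sw12)
  hence B1: "e*(t*x) = t*x" using A1 h by (simp add: assoc3_def)
  have "assoc3 t x e = - assoc3 t e x" by (rule sw23)
  hence B2: "(t*x)*e = 0" using A1 h by (simp add: assoc3_def)
  show "c12 (t*x)" using B1 B2 by (simp add: c12_def)
  have "assoc3 x e t = assoc3 e t x" by (rule cyc)
  moreover have "assoc3 e t x = 0" using B1 h by (simp add: assoc3_def)
  ultimately show "x*t = 0" using h by (simp add: assoc3_def)
qed

lemma p12_21: assumes "c12 x" "c21 t" shows "c11 (x*t)" "c22 (t*x)"
proof -
  from assms have h: "e*x = x" "x*e = 0" "e*t = 0" "t*e = t" by (auto simp: c12_def c21_def)
  have A1: "assoc3 x e t = 0" using h by (simp add: assoc3_def)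
  have A2: "assoc3 t e x = 0" using h by (simp add: assoc3_def)
  have "assoc3 e x t = - assoc3 x e t" by (rule sw12)
  hence B1: "e*(x*t) = x*t" using A1 h by (simp add: assoc3_def)
  have "assoc3 x t e = - assoc3 x e t" by (rule sw23)
  hence B2: "(x*t)*e = x*t" using A1 h by (simp add: assoc3_def)
  show "c11 (x*t)" using B1 B2 by (simp add: c11_def)
  have "assoc3 e t x = - assoc3 t e x" by (rule sw12)
  hence B3: "e*(t*x) = 0" using A2 h by (simp add: assoc3_def)
  have "assoc3 t x e = - assoc3 t e x" by (rule sw23)
  hence B4: "(t*x)*e = 0" using A2 h by (simp add: assoc3_def)
  show "c22 (t*x)" using B3 B4 by (simp add: c22_def)
qed

lemma p12_12: assumes "c12 a" "c12 b" shows "c21 (a*b)"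
proof -
  from assms have h: "e*a = a" "a*e = 0" "e*b = b" "b*e = 0" by (auto simp: c12_def)
  have A1: "assoc3 a e b = - (a*b)" using h by (simp add: assoc3_def)
  have "assoc3 e a b = - assoc3 a e b" by (rule sw12)
  hence B1: "e*(a*b) = 0" using A1 h by (simp add: assoc3_def)
  have "assoc3 a b e = - assoc3 a e b" by (rule sw23)
  hence B2: "(a*b)*e = a*b" using A1 h by (simp add: assoc3_def)
  show ?thesis using B1 B2 by (simp add: c21_def)
qed

lemma p21_21: assumes "c21 a" "c21 b" shows "c12 (a*b)"
proof -
  from assms have h: "e*a = 0" "a*e = a" "e*b = 0" "b*e = b" by (auto simp: c21_def)
  have A1: "assoc3 a e b = a*b" using h by (simp add: assoc3_def)
  have "assoc3 e a b = - assoc3 a e b" by (rule sw12)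
  hence B1: "e*(a*b) = a*b" using A1 h by (simp add: assoc3_def)
  have "assoc3 a b e = - assoc3 a e b" by (rule sw23)
  hence B2: "(a*b)*e = 0" using A1 h by (simp add: assoc3_def)
  show ?thesis using B1 B2 by (simp add: c12_def)
qed


lemma cc12_21: assumes "c12 x" "c21 t" shows "comm (comm x t) e = 0"
proof -
  have "c11 (x*t)" "c22 (t*x)" using p12_21[OF assms] by auto
  thus ?thesis by (simp add: comm_def[of x t] ce11 ce22)
qed
lemma cc21_12: assumes "c21 t" "c12 x" shows "comm (comm t x) e = 0"
proof -
  have "c11 (x*t)" "c22 (t*x)" using p12_21[OF assms(2,1)] by auto
  thus ?thesis by (simp add: comm_def[of t x] ce11 ce22)
qed
lemma cd21: assumes "c11 a" "c22 b" "c21 t" shows "c21 (comm (a+b) t)"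
proof -
  have "a*t = 0" "c21 (t*a)" using p11_21 assms by auto
  moreover have "t*b = 0" "c21 (b*t)" using p22_21 assms by auto
  ultimately show ?thesis by (simp add: comm_def cl21)
qed
lemma cd12: assumes "c11 a" "c22 b" "c12 t" shows "c12 (comm (a+b) t)"
proof -
  have "t*a = 0" "c12 (a*t)" using p11_12 assms by auto
  moreover have "b*t = 0" "c12 (t*b)" using p22_12 assms by auto
  ultimately show ?thesis by (simp add: comm_def cl12)
qed
lemma c1212: "c12 a \<Longrightarrow> c12 b \<Longrightarrow> c21 (comm a b)"
  by (simp add: comm_def p12_12 cl21)
lemma c2121: "c21 a \<Longrightarrow> c21 b \<Longrightarrow> c12 (comm a b)"
  by (simp add: comm_def p21_21 cl12)

lemma center_comm: "(z::'a) \<in> center \<Longrightarrow> comm z x = 0" "(z::'a) \<in> center \<Longrightarrow> comm x z = 0"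
  by (auto simp: center_def) (simp add: comm_anti[of x z])

end

locale LD = AR e for e :: "'a::{ab_group_add,times}" +
  fixes D :: "'a \<Rightarrow> 'a"
  assumes der: "D (comm (comm x y) w) = comm (comm (D x) y) w + comm (comm x (D y)) w + comm (comm x y) (D w)"
  and cond1c: "c11 a \<Longrightarrow> c22 b \<Longrightarrow> (\<forall>x. c12 x \<longrightarrow> comm (a + b) x = 0) \<Longrightarrow> a + b \<in> center"
  and cond2c: "c11 a \<Longrightarrow> c22 b \<Longrightarrow> (\<forall>x. c21 x \<longrightarrow> comm (a + b) x = 0) \<Longrightarrow> a + b \<in> center"
begin

definition "TT a b = D (a + b) - D a - D b"

lemma D0[simp]: "D 0 = 0"
  using der[of 0 0 0] by simp

lemma TT0[simp]: "TT a 0 = 0" "TT 0 a = 0" by (simp_all add: TT_def)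

lemma K1: "comm (comm (TT a b) y) w = TT (comm (comm a y) w) (comm (comm b y) w)"
proof -
  have s: "comm (comm a y) w + comm (comm b y) w = comm (comm (a+b) y) w" by simp
  have e1: "TT (comm (comm a y) w) (comm (comm b y) w) = D (comm (comm (a+b) y) w) - D (comm (comm a y) w) - D (comm (comm b y) w)"
    unfolding TT_def s ..
  show ?thesis unfolding e1 unfolding der TT_def by (simp add: algebra_simps)
qed

lemma S: assumes "TT x1 x2 \<in> center" "TT y1 y2 \<in> center"
  shows "D (comm (comm (x1+x2) (y1+y2)) w) = D (comm (comm x1 y1) w) + D (comm (comm x1 y2) w) + D (comm (comm x2 y1) w) + D (comm (comm x2 y2) w)"
proof -
  have hx: "D(x1+x2) = D x1 + D x2 + TT x1 x2" by (simp add: TT_def)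
  have hy: "D(y1+y2) = D y1 + D y2 + TT y1 y2" by (simp add: TT_def)
  have z1: "comm (TT x1 x2) y = 0" for y using assms(1) by (simp add: center_comm)
  have z2: "comm x (TT y1 y2) = 0" for x using assms(2) by (simp add: center_comm)
  show ?thesis unfolding der hx hy by (simp add: z1 z2 algebra_simps)
qed


lemma diagT: assumes "comm (comm T e) e = 0" shows "T = q11 T + q22 T"
proof -
  have "comm (comm T e) e = q21 T + q12 T"
    unfolding ce[of T] using ce21[OF cq21] ce12[OF cq12] by simp
  hence "q12 T + q21 T = 0" using assms by (simp add: add.commute)
  hence "q12 T = 0 \<and> q21 T = 0" using off_zero cq12 cq21 by blast
  thus ?thesis using decomp[of T] by simp
qed

lemma G2: assumes "comm (comm T e) e = 0" "\<And>t. c21 t \<Longrightarrow> comm (comm T t) e = 0"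
  shows "T \<in> center"
proof -
  have dT: "T = q11 T + q22 T" using diagT assms(1) .
  have "\<forall>x. c21 x \<longrightarrow> comm (q11 T + q22 T) x = 0"
  proof (intro allI impI)
    fix x assume x: "c21 x"
    have c: "c21 (comm (q11 T + q22 T) x)" using cd21 cq11 cq22 x by blast
    have "comm (comm T x) e = comm (comm (q11 T + q22 T) x) e" using dT by (rule arg_cong)
    hence "comm (comm (q11 T + q22 T) x) e = 0" using assms(2)[OF x] by simp
    thus "comm (q11 T + q22 T) x = 0" using ce21[OF c] by (simp del: comm_addl comm_addr)
  qed
  hence "q11 T + q22 T \<in> center" using cond2c cq11 cq22 by blast
  thus ?thesis using dT by simp
qed

lemma G1: assumes "comm (comm T e) e = 0" "\<And>t. c12 t \<Longrightarrow> comm (comm T t) e = 0"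
  shows "T \<in> center"
proof -
  have dT: "T = q11 T + q22 T" using diagT assms(1) .
  have "\<forall>x. c12 x \<longrightarrow> comm (q11 T + q22 T) x = 0"
  proof (intro allI impI)
    fix x assume x: "c12 x"
    have c: "c12 (comm (q11 T + q22 T) x)" using cd12 cq11 cq22 x by blast
    have "comm (comm T x) e = comm (comm (q11 T + q22 T) x) e" using dT by (rule arg_cong)
    hence "comm (comm (q11 T + q22 T) x) e = 0" using assms(2)[OF x] by simp
    thus "comm (q11 T + q22 T) x = 0" using ce12[OF c] by (simp del: comm_addl comm_addr)
  qed
  hence "q11 T + q22 T \<in> center" using cond1c cq11 cq22 by blast
  thus ?thesis using dT by simp
qed

lemma E12: assumes "c12 x" shows "TT e x \<in> center"
proof (rule G2)
  show "comm (comm (TT e x) e) e = 0"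
    unfolding K1 using ce12[OF assms] by simp
  fix t assume t: "c21 t"
  show "comm (comm (TT e x) t) e = 0"
    unfolding K1 using cc12_21[OF assms t] by simp
qed

lemma E21: assumes "c21 x" shows "TT e x \<in> center"
proof (rule G1)
  show "comm (comm (TT e x) e) e = 0"
    unfolding K1 using ce21[OF assms] by simp
  fix t assume t: "c12 t"
  show "comm (comm (TT e x) t) e = 0"
    unfolding K1 using cc21_12[OF assms t] by simp
qed

lemma ee12: "c12 x \<Longrightarrow> comm (comm e x) e = - x"
  using ce12[of x] comm_anti[of e x] by simp
lemma ee21: "c21 x \<Longrightarrow> comm (comm e x) e = - x"
  using ce21[of x] comm_anti[of e x] by simp
lemma xee12: "c12 x \<Longrightarrow> comm (comm x e) e = x"
  using ce12[of x] by simp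
lemma xee21: "c21 x \<Longrightarrow> comm (comm x e) e = x"
  using ce21[of x] by simp

lemma L1221: assumes a: "c12 a" and b: "c21 b" shows "D (a + b) = D a + D b"
proof -
  define b' where "b' = - b"
  have b': "c21 b'" using b cl21 by (simp add: b'_def)
  have eq: "comm (comm (e+a) (e+b')) e = a + b"
    using xee12[OF a] ee21[OF b'] cc12_21[OF a b'] by (simp add: b'_def)
  have "D (comm (comm (e+a) (e+b')) e) = D (comm (comm e e) e) + D (comm (comm e b') e) + D (comm (comm a e) e) + D (comm (comm a b') e)"
    by (rule S[OF E12[OF a] E21[OF b']])
  also have "\<dots> = D b + D a"
    using xee12[OF a] ee21[OF b'] cc12_21[OF a b'] by (simp add: b'_def)
  finally show ?thesis using eq by (simp add: add.commute)
qed


lemma L1212: assumes a: "c12 a" and b: "c12 b" shows "D (a + b) = D a + D b"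
proof -
  define b' where "b' = - b"
  have b': "c12 b'" using b cl12 by (simp add: b'_def)
  have hb: "- b' = b" by (simp add: b'_def)
  define c where "c = comm a b'"
  have c: "c21 c" unfolding c_def using c1212[OF a b'] .
  have cc: "comm (comm a b') e = c" using ce21[OF c] by (simp add: c_def)
  have eq: "comm (comm (e+a) (e+b')) e = (a + b) + c"
    using xee12[OF a] ee12[OF b'] cc hb by (simp add: algebra_simps)
  have "D (comm (comm (e+a) (e+b')) e) = D (comm (comm e e) e) + D (comm (comm e b') e) + D (comm (comm a e) e) + D (comm (comm a b') e)"
    by (rule S[OF E12[OF a] E12[OF b']])
  also have "\<dots> = D b + D a + D c"
    using xee12[OF a] ee12[OF b'] cc hb by simp
  finally have "D ((a + b) + c) = D b + D a + D c" using eq by simp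
  moreover have "D ((a + b) + c) = D (a+b) + D c" using L1221 cl12(1)[OF a b] c by blast
  ultimately show ?thesis by (simp add: algebra_simps)
qed

lemma L2121: assumes a: "c21 a" and b: "c21 b" shows "D (a + b) = D a + D b"
proof -
  define b' where "b' = - b"
  have b': "c21 b'" using b cl21 by (simp add: b'_def)
  have hb: "- b' = b" by (simp add: b'_def)
  define c where "c = - comm a b'"
  have c: "c12 c" unfolding c_def using c2121[OF a b'] cl12 by blast
  have cc: "comm (comm a b') e = c" using ce12[OF c2121[OF a b']] by (simp add: c_def)
  have eq: "comm (comm (e+a) (e+b')) e = c + (a + b)"
    using xee21[OF a] ee21[OF b'] cc hb by (simp add: algebra_simps)
  have "D (comm (comm (e+a) (e+b')) e) = D (comm (comm e e) e) + D (comm (comm e b') e) + D (comm (comm a e) e) + D (comm (comm a b') e)"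
    by (rule S[OF E21[OF a] E21[OF b']])
  also have "\<dots> = D b + D a + D c"
    using xee21[OF a] ee21[OF b'] cc hb by simp
  finally have "D (c + (a + b)) = D b + D a + D c" using eq by simp
  moreover have "D (c + (a + b)) = D c + D (a+b)" using L1221 cl21(1)[OF a b] c by blast
  ultimately show ?thesis by (simp add: algebra_simps)
qed

lemma Loff: assumes "c12 u1" "c21 u2" "c12 v1" "c21 v2"
  shows "TT (u1 + u2) (v1 + v2) = 0"
proof -
  have "D ((u1 + u2) + (v1 + v2)) = D ((u1 + v1) + (u2 + v2))" by (simp add: algebra_simps)
  also have "\<dots> = D (u1 + v1) + D (u2 + v2)" using L1221 cl12(1) cl21(1) assms by blast
  also have "\<dots> = D u1 + D v1 + (D u2 + D v2)" using L1212 L2121 assms by simp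
  finally show ?thesis unfolding TT_def using L1221 assms by (simp add: algebra_simps)
qed

lemma Lce: "TT (comm a e) (comm b e) = 0"
proof -
  have h: "comm a e = (- q12 a) + q21 a" "comm b e = (- q12 b) + q21 b" by (simp_all add: ce)
  show ?thesis unfolding h by (rule Loff[OF cl12(2)[OF cq12] cq21 cl12(2)[OF cq12] cq21])
qed

lemma main: "TT a b \<in> center"
proof (rule G2)
  show "comm (comm (TT a b) e) e = 0" unfolding K1 by (rule Lce)
  fix t show "comm (comm (TT a b) t) e = 0" unfolding K1 by (rule Lce)
qed


end

lemma (in AR) peirce_facts:
  "c11 a \<Longrightarrow> a \<in> peirce e 1 1" "c22 a \<Longrightarrow> a \<in> peirce e 2 2"
  "x \<in> peirce e 1 2 \<Longrightarrow> c12 x" "x \<in> peirce e 2 1 \<Longrightarrow> c21 x"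
proof -
  show "c11 a \<Longrightarrow> a \<in> peirce e 1 1"
    unfolding peirce_def rmul_def lmul_def c11_def by (rule CollectI, rule exI[of _ a]) simp
  show "c22 a \<Longrightarrow> a \<in> peirce e 2 2"
    unfolding peirce_def rmul_def lmul_def c22_def by (rule CollectI, rule exI[of _ a]) simp
  show "x \<in> peirce e 1 2 \<Longrightarrow> c12 x"
  proof -
    assume "x \<in> peirce e 1 2"
    then obtain a where "x = q12 a" unfolding peirce_def rmul_def lmul_def q12_def by auto
    thus "c12 x" using cq12 by simp
  qed
  show "x \<in> peirce e 2 1 \<Longrightarrow> c21 x"
  proof -
    assume "x \<in> peirce e 2 1"
    then obtain a where "x = q21 a" unfolding peirce_def rmul_def lmul_def q21_def by auto
    thus "c21 x" using cq21 by simp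
  qed
qed

theorem corollary2p7:
  fixes e1 :: "'a::{ab_group_add,times}"
    and D :: "'a \<Rightarrow> 'a"
  assumes alt: "alternative_ring TYPE('a)"
    and idem: "nontrivial_idempotent e1"
    and cond1: "\<And>a11 a22. a11 \<in> peirce e1 1 1 \<Longrightarrow> a22 \<in> peirce e1 2 2 \<Longrightarrow>
                  (\<forall>x\<in>peirce e1 1 2. comm (a11 + a22) x = 0) \<Longrightarrow> a11 + a22 \<in> center"
    and cond2: "\<And>a11 a22. a11 \<in> peirce e1 1 1 \<Longrightarrow> a22 \<in> peirce e1 2 2 \<Longrightarrow>
                  (\<forall>x\<in>peirce e1 2 1. comm (a11 + a22) x = 0) \<Longrightarrow> a11 + a22 \<in> center"
    and der: "mult_lie_3_derivation D"
  shows "\<forall>a b. D (a + b) - D a - D b \<in> center"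
proof -
  interpret AR e1
  proof
    fix x y z :: 'a
    show "x * (y + z) = x * y + x * z" "(x + y) * z = x * z + y * z"
      using alt unfolding alternative_ring_def nonassoc_ring_def by auto
    show "assoc3 x x y = 0" "assoc3 y x x = 0"
      using alt unfolding alternative_ring_def by auto
  next
    show "e1 * e1 = e1" using idem unfolding nontrivial_idempotent_def by auto
  qed
  interpret LD e1 D
  proof
    fix x y w :: 'a
    show "D (comm (comm x y) w) = comm (comm (D x) y) w + comm (comm x (D y)) w + comm (comm x y) (D w)"
      using der unfolding mult_lie_3_derivation_def by blast
  next
    fix a b :: 'a
    assume "c11 a" "c22 b" "\<forall>x. c12 x \<longrightarrow> comm (a + b) x = 0"
    thus "a + b \<in> center" using cond1 peirce_facts by blast
  next
    fix a b :: 'a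
    assume "c11 a" "c22 b" "\<forall>x. c21 x \<longrightarrow> comm (a + b) x = 0"
    thus "a + b \<in> center" using cond2 peirce_facts by blast
  qed
  show ?thesis using main unfolding TT_def by blast
qed

end
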